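(* Let $n\ge1$ and on $\mathbb{D}^n$ (coordinates $\alpha_0,\dots,\alpha_{n-1}$) use the Poisson bracket described in the context. Let $\Phi_k$ be the monic orthogonal polynomials on the unit circle and $\Phi_k^*$ their reversed polynomials. Then for all $z,w$, \[ \{\Phi_{n-1}(z),\Phi_n(w)\}=-i\bar\alpha_{n-1}\,w\,\frac{\Phi_{n-1}(z)\Phi_{n-1}^*(w)-\Phi_{n-1}(w)\Phi_{n-1}^*(z)}{z-w}, \] \[ \{\Phi_n(z),\Phi_{n-1}^*(w)\}=i\,zw\,\frac{\Phi_{n-1}(z)\Phi_{n-1}^*(w)-\Phi_{n-1}(w)\Phi_{n-1}^*(z)}{z-w}. \]
   Context: Let $\rho_j=(1-|\alpha_j|^2)^{1/2}$; the Poisson bracket is $\{f,g\}=\sum_{j=0}^{n-1}i\rho_j^2\bigl(\frac{\partial f}{\partial\bar\alpha_j}\frac{\partial g}{\partial\alpha_j}-\frac{\partial f}{\partial\alpha_j}\frac{\partial g}{\partial\bar\alpha_j}\bigr)$ (Wirtinger derivatives), i.e. $\{\alpha_j,\alpha_k\}=0$, $\{\alpha_j,\bar\alpha_k\}=-i\rho_j^2\delta_{jk}$; $z,w$ are held fixed. $\Phi_0=1$, $\Phi_{k+1}(z)=z\Phi_k(z)-\bar\alpha_k\Phi_k^*(z)$, $\Phi_k^*(z)=z^k\overline{\Phi_k(1/\bar z)}$. The identities are identities of polynomials in $z,w$. *)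

theory Defs
  imports "HOL-Analysis.Analysis" "HOL-Computational_Algebra.Polynomial"
begin

text \<open>Points of the polydisc are functions a :: nat => complex (only a 0 .. a (n-1) matter).
Real partial derivatives in the real and imaginary directions of coordinate j.\<close>

definition pd_re :: "((nat \<Rightarrow> complex) \<Rightarrow> complex) \<Rightarrow> (nat \<Rightarrow> complex) \<Rightarrow> nat \<Rightarrow> complex" where
  "pd_re f a j = vector_derivative (\<lambda>t::real. f (a(j := a j + of_real t))) (at 0)"

definition pd_im :: "((nat \<Rightarrow> complex) \<Rightarrow> complex) \<Rightarrow> (nat \<Rightarrow> complex) \<Rightarrow> nat \<Rightarrow> complex" where
  "pd_im f a j = vector_derivative (\<lambda>t::real. f (a(j := a j + \<i> * of_real t))) (at 0)"

definition wirt :: "((nat \<Rightarrow> complex) \<Rightarrow> complex) \<Rightarrow> (nat \<Rightarrow> complex) \<Rightarrow> nat \<Rightarrow> complex" where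
  "wirt f a j = (pd_re f a j - \<i> * pd_im f a j) / 2"

definition wirt_bar :: "((nat \<Rightarrow> complex) \<Rightarrow> complex) \<Rightarrow> (nat \<Rightarrow> complex) \<Rightarrow> nat \<Rightarrow> complex" where
  "wirt_bar f a j = (pd_re f a j + \<i> * pd_im f a j) / 2"

definition pbracket :: "nat \<Rightarrow> ((nat \<Rightarrow> complex) \<Rightarrow> complex) \<Rightarrow> ((nat \<Rightarrow> complex) \<Rightarrow> complex)
    \<Rightarrow> (nat \<Rightarrow> complex) \<Rightarrow> complex" where
  "pbracket n f g a = (\<Sum>j<n. \<i> * of_real (1 - (cmod (a j))\<^sup>2) *
       (wirt_bar f a j * wirt g a j - wirt f a j * wirt_bar g a j))"

text \<open>Reversed polynomial of degree-k polynomial p: z^k * conj(p(1/conj z)), written as a polynomial.\<close>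
definition rev_star :: "nat \<Rightarrow> complex poly \<Rightarrow> complex poly" where
  "rev_star k p = (\<Sum>j\<le>k. monom (cnj (coeff p (k - j))) j)"

text \<open>Monic orthogonal polynomials via the Szego recursion with Verblunsky coefficients a.\<close>
fun Phi :: "(nat \<Rightarrow> complex) \<Rightarrow> nat \<Rightarrow> complex poly" where
  "Phi a 0 = 1"
| "Phi a (Suc k) = pCons 0 (Phi a k) - smult (cnj (a k)) (rev_star k (Phi a k))"

definition Phi_star :: "(nat \<Rightarrow> complex) \<Rightarrow> nat \<Rightarrow> complex poly" where
  "Phi_star a k = rev_star k (Phi a k)"

end

theory Submission
  imports Defs
begin

definition WD :: "((nat \<Rightarrow> complex) \<Rightarrow> complex) \<Rightarrow> ((nat \<Rightarrow> complex) \<Rightarrow> nat \<Rightarrow> complex)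
   \<Rightarrow> ((nat \<Rightarrow> complex) \<Rightarrow> nat \<Rightarrow> complex) \<Rightarrow> bool" where
  "WD f df dbf \<longleftrightarrow> (\<forall>a j.
     ((\<lambda>t::real. f (a(j := a j + of_real t))) has_vector_derivative (df a j + dbf a j)) (at 0) \<and>
     ((\<lambda>t::real. f (a(j := a j + \<i> * of_real t))) has_vector_derivative (\<i> * (df a j - dbf a j))) (at 0))"

lemma WD_D1: "WD f df dbf \<Longrightarrow>
   ((\<lambda>t::real. f (a(j := a j + of_real t))) has_vector_derivative (df a j + dbf a j)) (at 0)"
  unfolding WD_def by blast
lemma WD_D2: "WD f df dbf \<Longrightarrow>
   ((\<lambda>t::real. f (a(j := a j + \<i> * of_real t))) has_vector_derivative (\<i> * (df a j - dbf a j))) (at 0)"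
  unfolding WD_def by blast

lemma WD_wirt:
  assumes "WD f df dbf"
  shows "wirt f a j = df a j" "wirt_bar f a j = dbf a j"
proof -
  have e1: "pd_re f a j = df a j + dbf a j"
    unfolding pd_re_def by (rule vector_derivative_at[OF WD_D1[OF assms]])
  have e2: "pd_im f a j = \<i> * (df a j - dbf a j)"
    unfolding pd_im_def by (rule vector_derivative_at[OF WD_D2[OF assms]])
  have ii: "\<i> * (\<i> * x) = - x" for x :: complex
    by (simp add: mult.assoc[symmetric])
  show "wirt f a j = df a j" unfolding wirt_def e1 e2 ii by simp
  show "wirt_bar f a j = dbf a j" unfolding wirt_bar_def e1 e2 ii by simp
qed

lemma hvd_re: "((\<lambda>t::real. of_real t :: complex) has_vector_derivative 1) (at 0)"
  using has_vector_derivative_of_real[OF DERIV_ident[of "at (0::real)"]] by simp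
lemma hvd_im: "((\<lambda>t::real. \<i> * of_real t :: complex) has_vector_derivative \<i>) (at 0)"
  using has_vector_derivative_mult_right[OF hvd_re, of \<i>] by simp

lemma WD_const: "WD (\<lambda>b. c) (\<lambda>a j. 0) (\<lambda>a j. 0)"
  unfolding WD_def by simp

lemma WD_coord: "WD (\<lambda>b. b k) (\<lambda>a j. if j = k then 1 else 0) (\<lambda>a j. 0)"
  unfolding WD_def
proof (intro allI conjI)
  fix a :: "nat \<Rightarrow> complex" and j
  show "((\<lambda>t::real. (a(j := a j + of_real t)) k) has_vector_derivative
      ((if j = k then 1 else 0) + 0)) (at 0)"
  proof (cases "j = k")
    case True
    then show ?thesis using has_vector_derivative_add[OF has_vector_derivative_const[of "a k"] hvd_re] by simp
  next
    case False
    then show ?thesis by simp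
  qed
  show "((\<lambda>t::real. (a(j := a j + \<i> * of_real t)) k) has_vector_derivative
      (\<i> * ((if j = k then 1 else 0) - 0))) (at 0)"
  proof (cases "j = k")
    case True
    then show ?thesis using has_vector_derivative_add[OF has_vector_derivative_const[of "a k"] hvd_im] by simp
  next
    case False
    then show ?thesis by simp
  qed
qed

lemma WD_cnj: assumes "WD f df dbf"
  shows "WD (\<lambda>b. cnj (f b)) (\<lambda>a j. cnj (dbf a j)) (\<lambda>a j. cnj (df a j))"
  unfolding WD_def
proof (intro allI conjI)
  fix a :: "nat \<Rightarrow> complex" and j
  show "((\<lambda>t::real. cnj (f (a(j := a j + of_real t)))) has_vector_derivative
      (cnj (dbf a j) + cnj (df a j))) (at 0)"
    using has_vector_derivative_cnj[OF WD_D1[OF assms, of a j]] by (simp add: add.commute)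
  show "((\<lambda>t::real. cnj (f (a(j := a j + \<i> * of_real t)))) has_vector_derivative
      (\<i> * (cnj (dbf a j) - cnj (df a j)))) (at 0)"
    using has_vector_derivative_cnj[OF WD_D2[OF assms, of a j]] by (simp add: algebra_simps)
qed

lemma WD_cnj_coord: "WD (\<lambda>b. cnj (b k)) (\<lambda>a j. 0) (\<lambda>a j. if j = k then 1 else 0)"
  using WD_cnj[OF WD_coord[of k]] by (simp add: if_distrib cong: if_cong)

lemma WD_add: assumes F: "WD f df dbf" and G: "WD g dg dbg"
  shows "WD (\<lambda>b. f b + g b) (\<lambda>a j. df a j + dg a j) (\<lambda>a j. dbf a j + dbg a j)"
  unfolding WD_def
proof (intro allI conjI)
  fix a :: "nat \<Rightarrow> complex" and j
  show "((\<lambda>t::real. f (a(j := a j + of_real t)) + g (a(j := a j + of_real t))) has_vector_derivative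
      (df a j + dg a j + (dbf a j + dbg a j))) (at 0)"
    using has_vector_derivative_add[OF WD_D1[OF F, of a j] WD_D1[OF G, of a j]] by (simp add: algebra_simps)
  show "((\<lambda>t::real. f (a(j := a j + \<i> * of_real t)) + g (a(j := a j + \<i> * of_real t))) has_vector_derivative
      (\<i> * (df a j + dg a j - (dbf a j + dbg a j)))) (at 0)"
    using has_vector_derivative_add[OF WD_D2[OF F, of a j] WD_D2[OF G, of a j]] by (simp add: algebra_simps)
qed

lemma WD_diff: assumes F: "WD f df dbf" and G: "WD g dg dbg"
  shows "WD (\<lambda>b. f b - g b) (\<lambda>a j. df a j - dg a j) (\<lambda>a j. dbf a j - dbg a j)"
  unfolding WD_def
proof (intro allI conjI)
  fix a :: "nat \<Rightarrow> complex" and j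
  show "((\<lambda>t::real. f (a(j := a j + of_real t)) - g (a(j := a j + of_real t))) has_vector_derivative
      (df a j - dg a j + (dbf a j - dbg a j))) (at 0)"
    using has_vector_derivative_diff[OF WD_D1[OF F, of a j] WD_D1[OF G, of a j]] by (simp add: algebra_simps)
  show "((\<lambda>t::real. f (a(j := a j + \<i> * of_real t)) - g (a(j := a j + \<i> * of_real t))) has_vector_derivative
      (\<i> * (df a j - dg a j - (dbf a j - dbg a j)))) (at 0)"
    using has_vector_derivative_diff[OF WD_D2[OF F, of a j] WD_D2[OF G, of a j]] by (simp add: algebra_simps)
qed

lemma WD_mult: assumes F: "WD f df dbf" and G: "WD g dg dbg"
  shows "WD (\<lambda>b. f b * g b) (\<lambda>a j. df a j * g a + f a * dg a j) (\<lambda>a j. dbf a j * g a + f a * dbg a j)"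
  unfolding WD_def
proof (intro allI conjI)
  fix a :: "nat \<Rightarrow> complex" and j
  have triv: "a(j := a j + of_real 0) = a" "a(j := a j + \<i> * of_real 0) = a" by auto
  show "((\<lambda>t::real. f (a(j := a j + of_real t)) * g (a(j := a j + of_real t))) has_vector_derivative
      (df a j * g a + f a * dg a j + (dbf a j * g a + f a * dbg a j))) (at 0)"
    using has_vector_derivative_mult[OF WD_D1[OF F, of a j] WD_D1[OF G, of a j]]
    unfolding triv by (simp add: algebra_simps)
  show "((\<lambda>t::real. f (a(j := a j + \<i> * of_real t)) * g (a(j := a j + \<i> * of_real t))) has_vector_derivative
      (\<i> * (df a j * g a + f a * dg a j - (dbf a j * g a + f a * dbg a j)))) (at 0)"
    using has_vector_derivative_mult[OF WD_D2[OF F, of a j] WD_D2[OF G, of a j]]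
    unfolding triv by (simp add: algebra_simps)
qed

definition smooth :: "((nat \<Rightarrow> complex) \<Rightarrow> complex) \<Rightarrow> bool" where
  "smooth f \<longleftrightarrow> (\<exists>df dbf. WD f df dbf)"

lemma smooth_WD: assumes "smooth f" shows "WD f (wirt f) (wirt_bar f)"
proof -
  obtain df dbf where W: "WD f df dbf" using assms unfolding smooth_def by blast
  have e1: "wirt f = df" by (intro ext) (rule WD_wirt(1)[OF W])
  have e2: "wirt_bar f = dbf" by (intro ext) (rule WD_wirt(2)[OF W])
  show ?thesis unfolding e1 e2 by (rule W)
qed

lemma smooth_const[simp]: "smooth (\<lambda>b. c)"
  unfolding smooth_def using WD_const by blast
lemma smooth_coord[simp]: "smooth (\<lambda>b. b k)"
  unfolding smooth_def using WD_coord by blast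
lemma smooth_cnj_coord[simp]: "smooth (\<lambda>b. cnj (b k))"
  unfolding smooth_def using WD_cnj_coord by blast
lemma smooth_mult[simp]: "smooth f \<Longrightarrow> smooth g \<Longrightarrow> smooth (\<lambda>b. f b * g b)"
  unfolding smooth_def using WD_mult by blast
lemma smooth_diff[simp]: "smooth f \<Longrightarrow> smooth g \<Longrightarrow> smooth (\<lambda>b. f b - g b)"
  unfolding smooth_def using WD_diff by blast

lemma wirt_const[simp]: "wirt (\<lambda>b. c) a j = 0" "wirt_bar (\<lambda>b. c) a j = 0"
  using WD_wirt[OF WD_const] by auto
lemma wirt_coord[simp]: "wirt (\<lambda>b. b k) a j = (if j = k then 1 else 0)" "wirt_bar (\<lambda>b. b k) a j = 0"
  using WD_wirt[OF WD_coord] by auto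
lemma wirt_cnj_coord[simp]: "wirt (\<lambda>b. cnj (b k)) a j = 0"
  "wirt_bar (\<lambda>b. cnj (b k)) a j = (if j = k then 1 else 0)"
  using WD_wirt[OF WD_cnj_coord] by auto
lemma wirt_mult[simp]: "smooth f \<Longrightarrow> smooth g \<Longrightarrow>
   wirt (\<lambda>b. f b * g b) a j = wirt f a j * g a + f a * wirt g a j"
  "smooth f \<Longrightarrow> smooth g \<Longrightarrow>
   wirt_bar (\<lambda>b. f b * g b) a j = wirt_bar f a j * g a + f a * wirt_bar g a j"
  using WD_wirt[OF WD_mult[OF smooth_WD smooth_WD]] by auto
lemma wirt_diff[simp]: "smooth f \<Longrightarrow> smooth g \<Longrightarrow>
   wirt (\<lambda>b. f b - g b) a j = wirt f a j - wirt g a j"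
  "smooth f \<Longrightarrow> smooth g \<Longrightarrow>
   wirt_bar (\<lambda>b. f b - g b) a j = wirt_bar f a j - wirt_bar g a j"
  using WD_wirt[OF WD_diff[OF smooth_WD smooth_WD]] by auto

lemma wirt_indep:
  assumes "\<And>x. f (a(j := x)) = f a"
  shows "wirt f a j = 0" "wirt_bar f a j = 0"
proof -
  have "pd_re f a j = 0" "pd_im f a j = 0"
    unfolding pd_re_def pd_im_def by (simp_all add: assms vector_derivative_at)
  then show "wirt f a j = 0" "wirt_bar f a j = 0" unfolding wirt_def wirt_bar_def by simp_all
qed

lemma coeff_rev_star: "coeff (rev_star k p) i = (if i \<le> k then cnj (coeff p (k - i)) else 0)"
  unfolding rev_star_def by (simp add: coeff_sum coeff_monom)

lemma Phi_high: "k < i \<Longrightarrow> coeff (Phi b k) i = 0"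
proof (induction k arbitrary: i)
  case 0
  then show ?case by (simp add: coeff_1)
next
  case (Suc k)
  then obtain m where "i = Suc m" "k < m" by (cases i) auto
  then show ?case using Suc by (simp add: coeff_rev_star coeff_pCons)
qed

lemma coeff_pCons0: "coeff (pCons 0 p) m = (if m = 0 then 0 else coeff p (m - 1))"
  by (cases m) auto

lemma Phi_star_Suc: "Phi_star b (Suc k) = Phi_star b k - smult (b k) (pCons 0 (Phi b k))"
proof (rule poly_eqI)
  fix i
  show "coeff (Phi_star b (Suc k)) i = coeff (Phi_star b k - smult (b k) (pCons 0 (Phi b k))) i"
  proof (cases "i \<le> Suc k")
    case True
    then show ?thesis
      unfolding Phi_star_def
      by (cases "i = Suc k") (auto simp: coeff_rev_star coeff_pCons0 Suc_diff_le)
  next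
    case False
    then obtain m where "i = Suc m" "k < m" by (cases i) auto
    then show ?thesis unfolding Phi_star_def
      by (simp add: coeff_rev_star coeff_pCons Phi_high)
  qed
qed

lemma Phi_dep: "(\<And>i. i < k \<Longrightarrow> b i = b' i) \<Longrightarrow> Phi b k = Phi b' k"
  by (induction k) auto

definition PP :: "nat \<Rightarrow> complex \<Rightarrow> (nat \<Rightarrow> complex) \<Rightarrow> complex" where
  "PP k z = (\<lambda>b. poly (Phi b k) z)"
definition SS :: "nat \<Rightarrow> complex \<Rightarrow> (nat \<Rightarrow> complex) \<Rightarrow> complex" where
  "SS k z = (\<lambda>b. poly (Phi_star b k) z)"

lemma PP_Suc: "PP (Suc k) z = (\<lambda>b. z * PP k z b - cnj (b k) * SS k z b)"
  unfolding PP_def SS_def Phi_star_def by (auto simp: fun_eq_iff)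
lemma SS_Suc: "SS (Suc k) z = (\<lambda>b. SS k z b - b k * (z * PP k z b))"
  unfolding PP_def SS_def by (auto simp: fun_eq_iff Phi_star_Suc)

lemma smooth_PP_SS: "smooth (PP k z) \<and> smooth (SS k z)"
proof (induction k arbitrary: z)
  case 0
  then show ?case by (simp add: PP_def SS_def Phi_star_def rev_star_def)
next
  case (Suc k)
  then show ?case unfolding PP_Suc SS_Suc by simp
qed

lemma smooth_PP[simp]: "smooth (PP k z)" and smooth_SS[simp]: "smooth (SS k z)"
  using smooth_PP_SS by auto

lemma indep_PP_SS:
  assumes "k \<le> j"
  shows "wirt (PP k z) a j = 0" "wirt_bar (PP k z) a j = 0"
    "wirt (SS k z) a j = 0" "wirt_bar (SS k z) a j = 0"
proof -
  have "\<And>x. Phi (a(j := x)) k = Phi a k" by (rule Phi_dep) (use assms in auto)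
  then show "wirt (PP k z) a j = 0" "wirt_bar (PP k z) a j = 0"
    "wirt (SS k z) a j = 0" "wirt_bar (SS k z) a j = 0"
    by (auto intro!: wirt_indep simp: PP_def SS_def Phi_star_def)
qed

lemma dPP:
  "j < k \<Longrightarrow> wirt (PP (Suc k) z) a j = z * wirt (PP k z) a j + (- cnj (a k)) * wirt (SS k z) a j"
  "j < k \<Longrightarrow> wirt_bar (PP (Suc k) z) a j = z * wirt_bar (PP k z) a j + (- cnj (a k)) * wirt_bar (SS k z) a j"
  "j < k \<Longrightarrow> wirt (SS (Suc k) z) a j = 1 * wirt (SS k z) a j + (- (a k * z)) * wirt (PP k z) a j"
  "j < k \<Longrightarrow> wirt_bar (SS (Suc k) z) a j = 1 * wirt_bar (SS k z) a j + (- (a k * z)) * wirt_bar (PP k z) a j"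
  "wirt (PP (Suc k) z) a k = 0"
  "wirt_bar (PP (Suc k) z) a k = - SS k z a"
  "wirt (SS (Suc k) z) a k = - (z * PP k z a)"
  "wirt_bar (SS (Suc k) z) a k = 0"
  unfolding PP_Suc SS_Suc by (simp_all add: indep_PP_SS)

lemma pb_antisym: "pbracket k f g a = - pbracket k g f a"
  unfolding pbracket_def by (simp add: sum_negf[symmetric] algebra_simps)

lemma pb_Suc: "pbracket (Suc k) f g a = pbracket k f g a + \<i> * (1 - a k * cnj (a k)) *
   (wirt_bar f a k * wirt g a k - wirt f a k * wirt_bar g a k)"
  by (simp add: pbracket_def complex_norm_square[symmetric])

lemma pb_lin:
  assumes "\<And>j. j < k \<Longrightarrow> wirt f a j = c1 * wirt f1 a j + c2 * wirt f2 a j"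
    "\<And>j. j < k \<Longrightarrow> wirt_bar f a j = c1 * wirt_bar f1 a j + c2 * wirt_bar f2 a j"
    "\<And>j. j < k \<Longrightarrow> wirt g a j = d1 * wirt g1 a j + d2 * wirt g2 a j"
    "\<And>j. j < k \<Longrightarrow> wirt_bar g a j = d1 * wirt_bar g1 a j + d2 * wirt_bar g2 a j"
  shows "pbracket k f g a = c1 * d1 * pbracket k f1 g1 a + c1 * d2 * pbracket k f1 g2 a
     + c2 * d1 * pbracket k f2 g1 a + c2 * d2 * pbracket k f2 g2 a"
  unfolding pbracket_def sum_distrib_left sum.distrib[symmetric]
  by (rule sum.cong) (auto simp: assms algebra_simps)

lemma main:
  "pbracket k (PP k z) (PP k w) a = 0 \<and> pbracket k (SS k z) (SS k w) a = 0 \<and>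
   (z - w) * pbracket k (PP k z) (SS k w) a = \<i> * w * (PP k z a * SS k w a - PP k w a * SS k z a)"
proof (induction k arbitrary: z w)
  case 0
  then show ?case by (simp add: pbracket_def PP_def SS_def Phi_star_def rev_star_def)
next
  case (Suc k)
  define X where "X = pbracket k (PP k z) (SS k w) a"
  define X' where "X' = pbracket k (PP k w) (SS k z) a"
  define cb where "cb = cnj (a k)"
  have A0: "pbracket k (PP k z) (PP k w) a = 0" using Suc by blast
  have B0: "pbracket k (SS k z) (SS k w) a = 0" using Suc by blast
  have CX: "(z - w) * X = \<i> * w * (PP k z a * SS k w a - PP k w a * SS k z a)"
    using Suc X_def by blast
  have CX': "(w - z) * X' = \<i> * z * (PP k w a * SS k z a - PP k z a * SS k w a)"
    using Suc X'_def by blast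
  have Y: "pbracket k (SS k z) (PP k w) a = - X'" unfolding X'_def by (rule pb_antisym)
  have key: "z * X = w * X'"
  proof (cases "z = w")
    case True then show ?thesis unfolding X_def X'_def by simp
  next
    case False
    have "(z - w) * (z * X - w * X') = z * ((z - w) * X) + w * ((w - z) * X')" by algebra
    also have "\<dots> = 0" unfolding CX CX' by algebra
    finally show ?thesis using False by simp
  qed
  have LA: "pbracket k (PP (Suc k) z) (PP (Suc k) w) a = z * w * pbracket k (PP k z) (PP k w) a
     + z * (- cb) * pbracket k (PP k z) (SS k w) a + (- cb) * w * pbracket k (SS k z) (PP k w) a
     + (- cb) * (- cb) * pbracket k (SS k z) (SS k w) a"
    unfolding cb_def by (rule pb_lin) (simp_all add: dPP)
  have LB: "pbracket k (SS (Suc k) z) (SS (Suc k) w) a = 1 * 1 * pbracket k (SS k z) (SS k w) a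
     + 1 * (- (a k * w)) * pbracket k (SS k z) (PP k w) a + (- (a k * z)) * 1 * pbracket k (PP k z) (SS k w) a
     + (- (a k * z)) * (- (a k * w)) * pbracket k (PP k z) (PP k w) a"
    by (rule pb_lin) (simp_all add: dPP)
  have LC: "pbracket k (PP (Suc k) z) (SS (Suc k) w) a = z * 1 * pbracket k (PP k z) (SS k w) a
     + z * (- (a k * w)) * pbracket k (PP k z) (PP k w) a + (- cb) * 1 * pbracket k (SS k z) (SS k w) a
     + (- cb) * (- (a k * w)) * pbracket k (SS k z) (PP k w) a"
    unfolding cb_def by (rule pb_lin) (simp_all add: dPP)
  have RA: "pbracket (Suc k) (PP (Suc k) z) (PP (Suc k) w) a = 0"
    unfolding pb_Suc LA A0 B0 Y X_def[symmetric] using key by (simp add: dPP algebra_simps)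
  have RB: "pbracket (Suc k) (SS (Suc k) z) (SS (Suc k) w) a = 0"
    unfolding pb_Suc LB A0 B0 Y X_def[symmetric] using key by (simp add: dPP algebra_simps)
  have "(z - w) * pbracket (Suc k) (PP (Suc k) z) (SS (Suc k) w) a
     = z * ((z - w) * X) + cb * a k * w * ((w - z) * X')
       + (z - w) * (\<i> * (1 - a k * cb) * (SS k z a * (w * PP k w a)))"
    unfolding pb_Suc LC A0 B0 Y X_def[symmetric] by (simp add: dPP cb_def algebra_simps)
  also have "\<dots> = \<i> * w * (PP (Suc k) z a * SS (Suc k) w a - PP (Suc k) w a * SS (Suc k) z a)"
    unfolding CX CX' PP_Suc SS_Suc cb_def by algebra
  finally show ?case using RA RB by blast
qed

theorem theorem13p6:
  fixes n :: nat and a :: "nat \<Rightarrow> complex" and z w :: complex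
  assumes "n \<ge> 1"
    and "\<forall>j<n. cmod (a j) < 1"
    and "z \<noteq> w"
  shows "pbracket n (\<lambda>b. poly (Phi b (n - 1)) z) (\<lambda>b. poly (Phi b n) w) a
           = - \<i> * cnj (a (n - 1)) * w *
             (poly (Phi a (n - 1)) z * poly (Phi_star a (n - 1)) w
              - poly (Phi a (n - 1)) w * poly (Phi_star a (n - 1)) z) / (z - w)
       \<and> pbracket n (\<lambda>b. poly (Phi b n) z) (\<lambda>b. poly (Phi_star b (n - 1)) w) a
           = \<i> * z * w *
             (poly (Phi a (n - 1)) z * poly (Phi_star a (n - 1)) w
              - poly (Phi a (n - 1)) w * poly (Phi_star a (n - 1)) z) / (z - w)"
proof -
  obtain k where n: "n = Suc k" using assms(1) by (cases n) auto
  have e: "(\<lambda>b. poly (Phi b k) z) = PP k z" "(\<lambda>b. poly (Phi b (Suc k)) w) = PP (Suc k) w"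
    "(\<lambda>b. poly (Phi b (Suc k)) z) = PP (Suc k) z" "(\<lambda>b. poly (Phi_star b k) w) = SS k w"
    "poly (Phi a k) z = PP k z a" "poly (Phi a k) w = PP k w a"
    "poly (Phi_star a k) z = SS k z a" "poly (Phi_star a k) w = SS k w a"
    by (simp_all only: PP_def SS_def)
  define X where "X = pbracket k (PP k z) (SS k w) a"
  define K where "K = PP k z a * SS k w a - PP k w a * SS k z a"
  have zw: "z - w \<noteq> 0" using assms(3) by simp
  note M = main[of k z w a, folded X_def K_def]
  have A0: "pbracket k (PP k z) (PP k w) a = 0" and B0: "pbracket k (SS k z) (SS k w) a = 0"
    and CX: "(z - w) * X = \<i> * w * K"
    using M by auto
  have "X = ((z - w) * X) / (z - w)" using zw by simp
  then have X: "X = \<i> * w * K / (z - w)" unfolding CX .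
  have L1: "pbracket k (PP k z) (PP (Suc k) w) a = 1 * w * pbracket k (PP k z) (PP k w) a
     + 1 * (- cnj (a k)) * pbracket k (PP k z) (SS k w) a
     + 0 * w * pbracket k (PP k z) (PP k w) a + 0 * (- cnj (a k)) * pbracket k (PP k z) (SS k w) a"
    by (rule pb_lin) (simp_all add: dPP)
  have L2: "pbracket k (PP (Suc k) z) (SS k w) a = z * 1 * pbracket k (PP k z) (SS k w) a
     + z * 0 * pbracket k (PP k z) (SS k w) a
     + (- cnj (a k)) * 1 * pbracket k (SS k z) (SS k w) a + (- cnj (a k)) * 0 * pbracket k (SS k z) (SS k w) a"
    by (rule pb_lin) (simp_all add: dPP)
  have R1: "pbracket (Suc k) (PP k z) (PP (Suc k) w) a = - \<i> * cnj (a k) * w * K / (z - w)"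
    unfolding pb_Suc L1 A0 X_def[symmetric] X by (simp add: dPP indep_PP_SS)
  have R2: "pbracket (Suc k) (PP (Suc k) z) (SS k w) a = \<i> * z * w * K / (z - w)"
    unfolding pb_Suc L2 B0 X_def[symmetric] X by (simp add: dPP indep_PP_SS)
  show ?thesis unfolding n diff_Suc_1 e using R1 R2 unfolding K_def by simp
qed

end
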